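(* Let $G$ be a discrete group, $\mathcal{B}=(B_g)_{g\in G}$ a Fell bundle, $\rho$ a $\mathcal{B}$-action on a Hilbert $\mathcal{B}$-bundle $\mathcal{X}=(X_g)_{g\in G}$, and $x\in X_e$. Then for each $g\in G$ the map $T_g:B_g\to B_g$, $T_g(b)=\langle x,\rho(b)x\rangle_{\mathcal{B}}$, is well-defined and linear, and $T=(T_g)_{g\in G}$ is a positive definite $\mathcal{B}$-bundle map.
   Context: Fell bundles are in the sense of Exel; $\mathcal{B}$ also denotes the disjoint union of fibres and $e$ is the unit of $G$. A Hilbert $\mathcal{B}$-bundle is a family $\mathcal{X}=(X_r)_{r\in G}$ of Banach spaces with maps $(x,b)\mapsto xb$ and $(x,y)\mapsto\langle x,y\rangle_{\mathcal{B}}\in\mathcal{B}$ such that: $X_rB_s\subseteq X_{rs}$ bilinearly; $\langle X_r,X_s\rangle_{\mathcal{B}}\subseteq B_{r^{-1}s}$, linear in the second variable; $\langle x,yb\rangle_{\mathcal{B}}=\langle x,y\rangle_{\mathcal{B}}b$, $\langle x,y\rangle_{\mathcal{B}}^*=\langle y,x\rangle_{\mathcal{B}}$; $\langle x,x\rangle_{\mathcal{B}}\ge0$ in $B_e$, zero only for $x=0$; $\|x\|=\|\langle x,x\rangle_{\mathcal{B}}\|^{1/2}$. A $\mathcal{B}$-action on $\mathcal{X}$ is a map $\rho$ from $\mathcal{B}$ to the maps $\mathcal{X}\to\mathcal{X}$ with: $\rho(B_g)X_h\subseteq X_{gh}$, $(b,x)\mapsto\rho(b)x$ bilinear there; $\rho(bc)=\rho(b)\rho(c)$;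 $\langle\rho(b)x,y\rangle_{\mathcal{B}}=\langle x,\rho(b^* )y\rangle_{\mathcal{B}}$; $(\rho(b)x)c=\rho(b)(xc)$. A $\mathcal{B}$-bundle map is a family of bounded linear maps $T_g:B_g\to B_g$; it is positive definite if $\sum_{i,j=1}^nb_iT_{g_i^{-1}g_j}(a_i^*a_j)b_j^*\ge0$ in $B_e$ for all $n$, $g_i\in G$, $a_i,b_i\in B_{g_i}$. *)

theory Defs
  imports Complex_Main "HOL-Algebra.Group"
begin

definition banach_fibre ::
  "'a set \<Rightarrow> ('a \<Rightarrow> 'a \<Rightarrow> 'a) \<Rightarrow> (complex \<Rightarrow> 'a \<Rightarrow> 'a) \<Rightarrow> 'a \<Rightarrow> ('a \<Rightarrow> real) \<Rightarrow> bool"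
where
  "banach_fibre F ad sm z nr \<longleftrightarrow>
     z \<in> F \<and>
     (\<forall>a\<in>F. \<forall>b\<in>F. ad a b \<in> F) \<and>
     (\<forall>c. \<forall>a\<in>F. sm c a \<in> F) \<and>
     (\<forall>a\<in>F. \<forall>b\<in>F. \<forall>c\<in>F. ad (ad a b) c = ad a (ad b c)) \<and>
     (\<forall>a\<in>F. \<forall>b\<in>F. ad a b = ad b a) \<and>
     (\<forall>a\<in>F. ad a z = a) \<and>
     (\<forall>a\<in>F. ad a (sm (-1) a) = z) \<and>
     (\<forall>c. \<forall>a\<in>F. \<forall>b\<in>F. sm c (ad a b) = ad (sm c a) (sm c b)) \<and>
     (\<forall>c d. \<forall>a\<in>F. sm (c + d) a = ad (sm c a) (sm d a)) \<and>
     (\<forall>c d. \<forall>a\<in>F. sm c (sm d a) = sm (c * d) a) \<and>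
     (\<forall>a\<in>F. sm 1 a = a) \<and>
     (\<forall>a\<in>F. nr a = 0 \<longleftrightarrow> a = z) \<and>
     (\<forall>c. \<forall>a\<in>F. nr (sm c a) = cmod c * nr a) \<and>
     (\<forall>a\<in>F. \<forall>b\<in>F. nr (ad a b) \<le> nr a + nr b) \<and>
     (\<forall>s. (\<forall>n. s n \<in> F) \<longrightarrow>
          (\<forall>e>0. \<exists>N. \<forall>m\<ge>N. \<forall>n\<ge>N. nr (ad (s m) (sm (-1) (s n))) < e) \<longrightarrow>
          (\<exists>l\<in>F. (\<lambda>n. nr (ad (s n) (sm (-1) l))) \<longlonglongrightarrow> 0))"

text \<open>The type 'b is the total space (disjoint union of the fibres);
fb_deg b is the group element g with b in B_g. Addition, scalar
multiplication and norm are only meaningful inside a fibre.\<close>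

record ('g, 'b) fell_ops =
  fb_deg  :: "'b \<Rightarrow> 'g"
  fb_add  :: "'b \<Rightarrow> 'b \<Rightarrow> 'b"
  fb_smul :: "complex \<Rightarrow> 'b \<Rightarrow> 'b"
  fb_zero :: "'g \<Rightarrow> 'b"
  fb_norm :: "'b \<Rightarrow> real"
  fb_mul  :: "'b \<Rightarrow> 'b \<Rightarrow> 'b"
  fb_star :: "'b \<Rightarrow> 'b"

definition fibre :: "('g, 'b, 'z) fell_ops_scheme \<Rightarrow> 'g \<Rightarrow> 'b set" where
  "fibre B g = {b. fb_deg B b = g}"

definition fb_pos :: "('g, 'm) monoid_scheme \<Rightarrow> ('g, 'b, 'z) fell_ops_scheme \<Rightarrow> 'b \<Rightarrow> bool" where
  "fb_pos G B a \<longleftrightarrow> fb_deg B a = \<one>\<^bsub>G\<^esub> \<and>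
     (\<exists>c. fb_deg B c = \<one>\<^bsub>G\<^esub> \<and> a = fb_mul B (fb_star B c) c)"

definition fell_bundle :: "('g, 'm) monoid_scheme \<Rightarrow> ('g, 'b, 'z) fell_ops_scheme \<Rightarrow> bool" where
  "fell_bundle G B \<longleftrightarrow>
     group G \<and>
     (\<forall>b. fb_deg B b \<in> carrier G) \<and>
     (\<forall>g\<in>carrier G. fb_deg B (fb_zero B g) = g \<and>
        banach_fibre (fibre B g) (fb_add B) (fb_smul B) (fb_zero B g) (fb_norm B)) \<and>
     \<comment> \<open>B_r B_s \<subseteq> B_rs\<close>
     (\<forall>b c. fb_deg B (fb_mul B b c) = fb_deg B b \<otimes>\<^bsub>G\<^esub> fb_deg B c) \<and>
     \<comment> \<open>multiplication is bilinear from B_r x B_s to B_rs\<close>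
     (\<forall>a a' c. fb_deg B a = fb_deg B a' \<longrightarrow>
        fb_mul B (fb_add B a a') c = fb_add B (fb_mul B a c) (fb_mul B a' c) \<and>
        fb_mul B c (fb_add B a a') = fb_add B (fb_mul B c a) (fb_mul B c a')) \<and>
     (\<forall>k a c. fb_mul B (fb_smul B k a) c = fb_smul B k (fb_mul B a c) \<and>
        fb_mul B c (fb_smul B k a) = fb_smul B k (fb_mul B c a)) \<and>
     \<comment> \<open>associativity\<close>
     (\<forall>a b c. fb_mul B (fb_mul B a b) c = fb_mul B a (fb_mul B b c)) \<and>
     \<comment> \<open>submultiplicativity of the norm\<close>
     (\<forall>b c. fb_norm B (fb_mul B b c) \<le> fb_norm B b * fb_norm B c) \<and>
     \<comment> \<open>B_r* \<subseteq> B_{r^-1}\<close>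
     (\<forall>b. fb_deg B (fb_star B b) = inv\<^bsub>G\<^esub> (fb_deg B b)) \<and>
     \<comment> \<open>involution is conjugate linear\<close>
     (\<forall>a a'. fb_deg B a = fb_deg B a' \<longrightarrow>
        fb_star B (fb_add B a a') = fb_add B (fb_star B a) (fb_star B a')) \<and>
     (\<forall>k a. fb_star B (fb_smul B k a) = fb_smul B (cnj k) (fb_star B a)) \<and>
     (\<forall>b c. fb_star B (fb_mul B b c) = fb_mul B (fb_star B c) (fb_star B b)) \<and>
     (\<forall>b. fb_star B (fb_star B b) = b) \<and>
     (\<forall>b. fb_norm B (fb_mul B (fb_star B b) b) = (fb_norm B b)\<^sup>2) \<and>
     (\<forall>b. fb_pos G B (fb_mul B (fb_star B b) b))"

record ('g, 'b, 'x) hilb_ops =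
  hb_deg  :: "'x \<Rightarrow> 'g"
  hb_add  :: "'x \<Rightarrow> 'x \<Rightarrow> 'x"
  hb_smul :: "complex \<Rightarrow> 'x \<Rightarrow> 'x"
  hb_zero :: "'g \<Rightarrow> 'x"
  hb_norm :: "'x \<Rightarrow> real"
  hb_ract :: "'x \<Rightarrow> 'b \<Rightarrow> 'x"
  hb_ip   :: "'x \<Rightarrow> 'x \<Rightarrow> 'b"

definition hfibre :: "('g, 'b, 'x, 'z) hilb_ops_scheme \<Rightarrow> 'g \<Rightarrow> 'x set" where
  "hfibre X g = {x. hb_deg X x = g}"

definition hilbert_bundle ::
  "('g, 'm) monoid_scheme \<Rightarrow> ('g, 'b, 'z) fell_ops_scheme \<Rightarrow> ('g, 'b, 'x, 'w) hilb_ops_scheme \<Rightarrow> bool"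
where
  "hilbert_bundle G B X \<longleftrightarrow>
     (\<forall>x. hb_deg X x \<in> carrier G) \<and>
     (\<forall>g\<in>carrier G. hb_deg X (hb_zero X g) = g \<and>
        banach_fibre (hfibre X g) (hb_add X) (hb_smul X) (hb_zero X g) (hb_norm X)) \<and>
     \<comment> \<open>X_r B_s \<subseteq> X_rs, bilinearly\<close>
     (\<forall>x b. hb_deg X (hb_ract X x b) = hb_deg X x \<otimes>\<^bsub>G\<^esub> fb_deg B b) \<and>
     (\<forall>x x' b. hb_deg X x = hb_deg X x' \<longrightarrow>
        hb_ract X (hb_add X x x') b = hb_add X (hb_ract X x b) (hb_ract X x' b)) \<and>
     (\<forall>x b b'. fb_deg B b = fb_deg B b' \<longrightarrow>
        hb_ract X x (fb_add B b b') = hb_add X (hb_ract X x b) (hb_ract X x b')) \<and>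
     (\<forall>k x b. hb_ract X (hb_smul X k x) b = hb_smul X k (hb_ract X x b) \<and>
        hb_ract X x (fb_smul B k b) = hb_smul X k (hb_ract X x b)) \<and>
     \<comment> \<open><X_r, X_s> \<subseteq> B_{r^-1 s}\<close>
     (\<forall>x y. fb_deg B (hb_ip X x y) = inv\<^bsub>G\<^esub> (hb_deg X x) \<otimes>\<^bsub>G\<^esub> hb_deg X y) \<and>
     \<comment> \<open>linear in the second variable\<close>
     (\<forall>x y y'. hb_deg X y = hb_deg X y' \<longrightarrow>
        hb_ip X x (hb_add X y y') = fb_add B (hb_ip X x y) (hb_ip X x y')) \<and>
     (\<forall>k x y. hb_ip X x (hb_smul X k y) = fb_smul B k (hb_ip X x y)) \<and>
     (\<forall>x y b. hb_ip X x (hb_ract X y b) = fb_mul B (hb_ip X x y) b) \<and>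
     (\<forall>x y. fb_star B (hb_ip X x y) = hb_ip X y x) \<and>
     (\<forall>x. fb_pos G B (hb_ip X x x)) \<and>
     (\<forall>x. hb_ip X x x = fb_zero B \<one>\<^bsub>G\<^esub> \<longrightarrow> x = hb_zero X (hb_deg X x)) \<and>
     (\<forall>x. hb_norm X x = sqrt (fb_norm B (hb_ip X x x)))"

definition bundle_action ::
  "('g, 'm) monoid_scheme \<Rightarrow> ('g, 'b, 'z) fell_ops_scheme \<Rightarrow> ('g, 'b, 'x, 'w) hilb_ops_scheme
   \<Rightarrow> ('b \<Rightarrow> 'x \<Rightarrow> 'x) \<Rightarrow> bool"
where
  "bundle_action G B X \<rho> \<longleftrightarrow>
     (\<forall>b x. hb_deg X (\<rho> b x) = fb_deg B b \<otimes>\<^bsub>G\<^esub> hb_deg X x) \<and>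
     (\<forall>b b' x. fb_deg B b = fb_deg B b' \<longrightarrow>
        \<rho> (fb_add B b b') x = hb_add X (\<rho> b x) (\<rho> b' x)) \<and>
     (\<forall>b x x'. hb_deg X x = hb_deg X x' \<longrightarrow>
        \<rho> b (hb_add X x x') = hb_add X (\<rho> b x) (\<rho> b x')) \<and>
     (\<forall>k b x. \<rho> (fb_smul B k b) x = hb_smul X k (\<rho> b x) \<and>
        \<rho> b (hb_smul X k x) = hb_smul X k (\<rho> b x)) \<and>
     (\<forall>b c. \<rho> (fb_mul B b c) = \<rho> b \<circ> \<rho> c) \<and>
     (\<forall>b x y. hb_ip X (\<rho> b x) y = hb_ip X x (\<rho> (fb_star B b) y)) \<and>
     (\<forall>b x c. hb_ract X (\<rho> b x) c = \<rho> b (hb_ract X x c))"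

text \<open>A B-bundle map is a family (T_g) of bounded linear maps B_g \<rightarrow> B_g;
it is represented by one function T on the total space whose restriction
to B_g is T_g.\<close>

definition bundle_map ::
  "('g, 'm) monoid_scheme \<Rightarrow> ('g, 'b, 'z) fell_ops_scheme \<Rightarrow> ('b \<Rightarrow> 'b) \<Rightarrow> bool"
where
  "bundle_map G B T \<longleftrightarrow>
     (\<forall>g\<in>carrier G.
        (\<forall>b\<in>fibre B g. T b \<in> fibre B g) \<and>
        (\<forall>a\<in>fibre B g. \<forall>b\<in>fibre B g. T (fb_add B a b) = fb_add B (T a) (T b)) \<and>
        (\<forall>k. \<forall>a\<in>fibre B g. T (fb_smul B k a) = fb_smul B k (T a)) \<and>
        (\<exists>K. \<forall>b\<in>fibre B g. fb_norm B (T b) \<le> K * fb_norm B b))"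

fun fb_sum :: "('g, 'b, 'z) fell_ops_scheme \<Rightarrow> 'g \<Rightarrow> (nat \<Rightarrow> 'b) \<Rightarrow> nat \<Rightarrow> 'b" where
  "fb_sum B g f 0 = fb_zero B g"
| "fb_sum B g f (Suc n) = fb_add B (fb_sum B g f n) (f n)"

definition positive_definite ::
  "('g, 'm) monoid_scheme \<Rightarrow> ('g, 'b, 'z) fell_ops_scheme \<Rightarrow> ('b \<Rightarrow> 'b) \<Rightarrow> bool"
where
  "positive_definite G B T \<longleftrightarrow>
     (\<forall>n (gs :: nat \<Rightarrow> 'g) (a :: nat \<Rightarrow> 'b) (b :: nat \<Rightarrow> 'b).
        (\<forall>i<n. gs i \<in> carrier G \<and> a i \<in> fibre B (gs i) \<and> b i \<in> fibre B (gs i)) \<longrightarrow>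
        fb_pos G B
          (fb_sum B \<one>\<^bsub>G\<^esub> (\<lambda>i. fb_sum B \<one>\<^bsub>G\<^esub> (\<lambda>j.
              fb_mul B (fb_mul B (b i) (T (fb_mul B (fb_star B (a i)) (a j)))) (fb_star B (b j))) n) n))"

end

theory Submission
  imports Defs
begin

locale bfib =
  fixes F :: "'a set" and ad :: "'a \<Rightarrow> 'a \<Rightarrow> 'a" and sm :: "complex \<Rightarrow> 'a \<Rightarrow> 'a"
    and z :: 'a and nr :: "'a \<Rightarrow> real"
  assumes bf: "banach_fibre F ad sm z nr"
begin

lemmas bfd = bf[unfolded banach_fibre_def]

lemmas z_in0 = bfd[THEN conjunct1]
lemmas ad_in0 = bfd[THEN conjunct2, THEN conjunct1]
lemmas sm_in0 = bfd[THEN conjunct2, THEN conjunct2, THEN conjunct1]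
lemmas ad_assoc0 = bfd[THEN conjunct2, THEN conjunct2, THEN conjunct2, THEN conjunct1]
lemmas ad_comm0 = bfd[THEN conjunct2, THEN conjunct2, THEN conjunct2, THEN conjunct2, THEN conjunct1]
lemmas ad_z0 = bfd[THEN conjunct2, THEN conjunct2, THEN conjunct2, THEN conjunct2, THEN conjunct2, THEN conjunct1]
lemmas ad_neg0 = bfd[THEN conjunct2, THEN conjunct2, THEN conjunct2, THEN conjunct2, THEN conjunct2, THEN conjunct2, THEN conjunct1]
lemmas sm_ad0 = bfd[THEN conjunct2, THEN conjunct2, THEN conjunct2, THEN conjunct2, THEN conjunct2, THEN conjunct2, THEN conjunct2, THEN conjunct1]
lemmas sm_add0 = bfd[THEN conjunct2, THEN conjunct2, THEN conjunct2, THEN conjunct2, THEN conjunct2, THEN conjunct2, THEN conjunct2, THEN conjunct2, THEN conjunct1]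
lemmas sm_sm0 = bfd[THEN conjunct2, THEN conjunct2, THEN conjunct2, THEN conjunct2, THEN conjunct2, THEN conjunct2, THEN conjunct2, THEN conjunct2, THEN conjunct2, THEN conjunct1]
lemmas sm_one0 = bfd[THEN conjunct2, THEN conjunct2, THEN conjunct2, THEN conjunct2, THEN conjunct2, THEN conjunct2, THEN conjunct2, THEN conjunct2, THEN conjunct2, THEN conjunct2, THEN conjunct1]
lemmas nr_zero_iff0 = bfd[THEN conjunct2, THEN conjunct2, THEN conjunct2, THEN conjunct2, THEN conjunct2, THEN conjunct2, THEN conjunct2, THEN conjunct2, THEN conjunct2, THEN conjunct2, THEN conjunct2, THEN conjunct1]
lemmas nr_sm0 = bfd[THEN conjunct2, THEN conjunct2, THEN conjunct2, THEN conjunct2, THEN conjunct2, THEN conjunct2, THEN conjunct2, THEN conjunct2, THEN conjunct2, THEN conjunct2, THEN conjunct2, THEN conjunct2, THEN conjunct1]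
lemmas nr_tri0 = bfd[THEN conjunct2, THEN conjunct2, THEN conjunct2, THEN conjunct2, THEN conjunct2, THEN conjunct2, THEN conjunct2, THEN conjunct2, THEN conjunct2, THEN conjunct2, THEN conjunct2, THEN conjunct2, THEN conjunct2, THEN conjunct1]
lemmas complete0 = bfd[THEN conjunct2, THEN conjunct2, THEN conjunct2, THEN conjunct2, THEN conjunct2, THEN conjunct2, THEN conjunct2, THEN conjunct2, THEN conjunct2, THEN conjunct2, THEN conjunct2, THEN conjunct2, THEN conjunct2, THEN conjunct2]

lemma z_in[simp]: "z \<in> F" using z_in0 .
lemma ad_in[simp]: "a \<in> F \<Longrightarrow> b \<in> F \<Longrightarrow> ad a b \<in> F" using ad_in0 by blast
lemma sm_in[simp]: "a \<in> F \<Longrightarrow> sm c a \<in> F" using sm_in0 by blast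
lemma ad_assoc: "a \<in> F \<Longrightarrow> b \<in> F \<Longrightarrow> c \<in> F \<Longrightarrow> ad (ad a b) c = ad a (ad b c)"
  using ad_assoc0 by blast
lemma ad_comm: "a \<in> F \<Longrightarrow> b \<in> F \<Longrightarrow> ad a b = ad b a"
  using ad_comm0 by blast
lemma ad_left_comm: "a \<in> F \<Longrightarrow> b \<in> F \<Longrightarrow> c \<in> F \<Longrightarrow> ad a (ad b c) = ad b (ad a c)"
  by (metis ad_assoc ad_comm)
lemma ad_z[simp]: "a \<in> F \<Longrightarrow> ad a z = a" using ad_z0 by blast
lemma z_ad[simp]: "a \<in> F \<Longrightarrow> ad z a = a" using ad_comm ad_z z_in by metis
lemma ad_neg[simp]: "a \<in> F \<Longrightarrow> ad a (sm (-1) a) = z" using ad_neg0 by blast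
lemma sm_ad: "a \<in> F \<Longrightarrow> b \<in> F \<Longrightarrow> sm c (ad a b) = ad (sm c a) (sm c b)"
  using sm_ad0 by blast
lemma sm_add: "a \<in> F \<Longrightarrow> sm (c + d) a = ad (sm c a) (sm d a)"
  using sm_add0 by blast
lemma sm_sm[simp]: "a \<in> F \<Longrightarrow> sm c (sm d a) = sm (c * d) a"
  using sm_sm0 by blast
lemma sm_one[simp]: "a \<in> F \<Longrightarrow> sm 1 a = a"
  using sm_one0 by blast
lemma nr_zero_iff: "a \<in> F \<Longrightarrow> nr a = 0 \<longleftrightarrow> a = z"
  using nr_zero_iff0 by blast
lemma nr_sm[simp]: "a \<in> F \<Longrightarrow> nr (sm c a) = cmod c * nr a"
  using nr_sm0 by blast
lemma nr_tri: "a \<in> F \<Longrightarrow> b \<in> F \<Longrightarrow> nr (ad a b) \<le> nr a + nr b"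
  using nr_tri0 by blast
lemma complete: "(\<forall>n. s n \<in> F) \<Longrightarrow>
          (\<forall>e>0. \<exists>N. \<forall>m\<ge>N. \<forall>n\<ge>N. nr (ad (s m) (sm (-1) (s n))) < e) \<Longrightarrow>
          (\<exists>l\<in>F. (\<lambda>n. nr (ad (s n) (sm (-1) l))) \<longlonglongrightarrow> 0)"
  using complete0 by blast

lemma ad_cancel: assumes "a \<in> F" "b \<in> F" "c \<in> F" "ad a b = ad a c" shows "b = c"
proof -
  have "b = ad (ad a (sm (-1) a)) b" using assms by simp
  also have "\<dots> = ad (sm (-1) a) (ad a b)" using assms by (metis ad_assoc ad_comm sm_in)
  also have "\<dots> = ad (sm (-1) a) (ad a c)" using assms by simp
  also have "\<dots> = ad (ad a (sm (-1) a)) c" using assms by (metis ad_assoc ad_comm sm_in)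
  finally show ?thesis using assms by simp
qed

lemma sm_zero[simp]: assumes "a \<in> F" shows "sm 0 a = z"
proof -
  have "ad (sm 0 a) (sm 0 a) = ad (sm 0 a) z" using sm_add[OF assms, of 0 0] assms by simp
  thus ?thesis using ad_cancel assms by (meson sm_in z_in)
qed

lemma sm_z[simp]: "sm c z = z"
proof -
  have "sm c z = sm c (sm 0 z)" by (simp only: sm_zero z_in)
  also have "\<dots> = sm 0 z" by (simp only: sm_sm z_in mult_zero_right)
  also have "\<dots> = z" by simp
  finally show ?thesis .
qed

lemma nr_z[simp]: "nr z = 0" using nr_zero_iff z_in by blast

lemma nr_nonneg: assumes "a \<in> F" shows "nr a \<ge> 0"
proof -
  have "0 = nr (ad a (sm (-1) a))" using assms by simp
  also have "\<dots> \<le> nr a + nr (sm (-1) a)" using assms by (intro nr_tri) simp_all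
  finally have "0 \<le> nr a + nr (sm (-1) a)" .
  then show ?thesis using assms by simp
qed

definition sub where "sub a b = ad a (sm (-1) b)"

lemma sub_in[simp]: "a \<in> F \<Longrightarrow> b \<in> F \<Longrightarrow> sub a b \<in> F" unfolding sub_def by simp

lemma sub_self[simp]: "a \<in> F \<Longrightarrow> sub a a = z" unfolding sub_def by simp

lemma sub_eq_z: assumes "a \<in> F" "b \<in> F" "sub a b = z" shows "a = b"
proof -
  have "ad (sm (-1) b) a = ad (sm (-1) b) b" using assms unfolding sub_def
    by (metis ad_comm ad_neg sm_in)
  thus ?thesis using ad_cancel assms by (meson sm_in)
qed

lemma sub_swap: assumes "a \<in> F" "b \<in> F" shows "sub b a = sm (-1) (sub a b)"
  using assms unfolding sub_def by (simp add: sm_ad ad_comm)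

lemma nr_sub_sym: assumes "a \<in> F" "b \<in> F" shows "nr (sub b a) = nr (sub a b)"
  using sub_swap[OF assms] assms by simp

lemma sub_trans: assumes "a \<in> F" "b \<in> F" "c \<in> F" shows "ad (sub a b) (sub b c) = sub a c"
proof -
  have "ad (sub a b) (sub b c) = ad a (ad (ad (sm (-1) b) b) (sm (-1) c))"
    using assms unfolding sub_def by (simp add: ad_assoc)
  also have "\<dots> = sub a c" using assms unfolding sub_def by (simp add: ad_comm)
  finally show ?thesis .
qed

lemma nr_sub_tri: assumes "a \<in> F" "b \<in> F" "c \<in> F" shows "nr (sub a c) \<le> nr (sub a b) + nr (sub b c)"
  using sub_trans[OF assms] nr_tri assms by (metis sub_in)

end


lemma (in bfib) sub_sm: "x \<in> F \<Longrightarrow> y \<in> F \<Longrightarrow> sub (sm c x) (sm c y) = sm c (sub x y)"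
  unfolding sub_def by (simp add: sm_ad mult.commute)

lemma (in bfib) ad4: assumes "p \<in> F" "q \<in> F" "r \<in> F" "s \<in> F"
  shows "ad (ad p q) (ad r s) = ad (ad p r) (ad q s)"
  using assms by (simp add: ad_assoc ad_left_comm[of q r s])

lemma (in bfib) sub_ad_cancel: assumes "a \<in> F" "x \<in> F" "y \<in> F" shows "sub (ad a x) (ad a y) = sub x y"
proof -
  have "sub (ad a x) (ad a y) = ad (ad a x) (ad (sm (-1) a) (sm (-1) y))"
    unfolding sub_def using assms by (simp add: sm_ad)
  also have "\<dots> = ad (ad a (sm (-1) a)) (ad x (sm (-1) y))"
    by (rule ad4) (simp_all add: assms)
  finally show ?thesis using assms unfolding sub_def by simp
qed

lemma (in bfib) sub_z[simp]: "x \<in> F \<Longrightarrow> sub x z = x" unfolding sub_def by simp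

lemma (in bfib) ad_sub: assumes "x \<in> F" "y \<in> F" shows "ad (sub x y) y = x"
  using assms unfolding sub_def by (simp add: ad_assoc ad_comm[of "sm (-1) y" y])

lemma (in bfib) sm_half_twice: assumes "w \<in> F" shows "ad (sm (-1/2) w) (sm (-1/2) w) = sm (-1) w"
  using sm_add[OF assms, of "-1/2" "-1/2"] by simp

lemma tendsto_zero_const:
  fixes c :: real
  assumes "\<And>n. c \<le> g n" "g \<longlonglongrightarrow> 0" shows "c \<le> 0"
  using LIMSEQ_le_const[OF assms(2)] assms(1) by blast

locale fctx =
  fixes G :: "('g, 'm) monoid_scheme" and B :: "('g, 'b, 'z) fell_ops_scheme"
  assumes fb: "fell_bundle G B"
begin

lemmas fbd = fb[unfolded fell_bundle_def]
lemmas grp = fbd[THEN conjunct1]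
lemmas deg_car0 = fbd[THEN conjunct2, THEN conjunct1]
lemmas fib0 = fbd[THEN conjunct2, THEN conjunct2, THEN conjunct1]
lemmas deg_mul0 = fbd[THEN conjunct2, THEN conjunct2, THEN conjunct2, THEN conjunct1]
lemmas mul_add0 = fbd[THEN conjunct2, THEN conjunct2, THEN conjunct2, THEN conjunct2, THEN conjunct1]
lemmas mul_sm0 = fbd[THEN conjunct2, THEN conjunct2, THEN conjunct2, THEN conjunct2, THEN conjunct2, THEN conjunct1]
lemmas mul_assoc0 = fbd[THEN conjunct2, THEN conjunct2, THEN conjunct2, THEN conjunct2, THEN conjunct2, THEN conjunct2, THEN conjunct1]
lemmas norm_mul0 = fbd[THEN conjunct2, THEN conjunct2, THEN conjunct2, THEN conjunct2, THEN conjunct2, THEN conjunct2, THEN conjunct2, THEN conjunct1]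
lemmas deg_star0 = fbd[THEN conjunct2, THEN conjunct2, THEN conjunct2, THEN conjunct2, THEN conjunct2, THEN conjunct2, THEN conjunct2, THEN conjunct2, THEN conjunct1]
lemmas star_add0 = fbd[THEN conjunct2, THEN conjunct2, THEN conjunct2, THEN conjunct2, THEN conjunct2, THEN conjunct2, THEN conjunct2, THEN conjunct2, THEN conjunct2, THEN conjunct1]
lemmas star_sm0 = fbd[THEN conjunct2, THEN conjunct2, THEN conjunct2, THEN conjunct2, THEN conjunct2, THEN conjunct2, THEN conjunct2, THEN conjunct2, THEN conjunct2, THEN conjunct2, THEN conjunct1]
lemmas star_mul0 = fbd[THEN conjunct2, THEN conjunct2, THEN conjunct2, THEN conjunct2, THEN conjunct2, THEN conjunct2, THEN conjunct2, THEN conjunct2, THEN conjunct2, THEN conjunct2, THEN conjunct2, THEN conjunct1]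
lemmas star_star0 = fbd[THEN conjunct2, THEN conjunct2, THEN conjunct2, THEN conjunct2, THEN conjunct2, THEN conjunct2, THEN conjunct2, THEN conjunct2, THEN conjunct2, THEN conjunct2, THEN conjunct2, THEN conjunct2, THEN conjunct1]
lemmas cstar0 = fbd[THEN conjunct2, THEN conjunct2, THEN conjunct2, THEN conjunct2, THEN conjunct2, THEN conjunct2, THEN conjunct2, THEN conjunct2, THEN conjunct2, THEN conjunct2, THEN conjunct2, THEN conjunct2, THEN conjunct2, THEN conjunct1]
lemmas pos0 = fbd[THEN conjunct2, THEN conjunct2, THEN conjunct2, THEN conjunct2, THEN conjunct2, THEN conjunct2, THEN conjunct2, THEN conjunct2, THEN conjunct2, THEN conjunct2, THEN conjunct2, THEN conjunct2, THEN conjunct2, THEN conjunct2]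

lemma group_G: "group G" using grp .
lemma deg_car[simp]: "fb_deg B b \<in> carrier G" using deg_car0 by blast
lemma deg_zero[simp]: "g \<in> carrier G \<Longrightarrow> fb_deg B (fb_zero B g) = g" using fib0 by blast
lemma bfibB: "g \<in> carrier G \<Longrightarrow> bfib (fibre B g) (fb_add B) (fb_smul B) (fb_zero B g) (fb_norm B)"
  unfolding bfib_def using fib0 by blast
lemma deg_mul[simp]: "fb_deg B (fb_mul B b c) = fb_deg B b \<otimes>\<^bsub>G\<^esub> fb_deg B c" using deg_mul0 by blast
lemma mul_add_l: "fb_deg B a = fb_deg B a' \<Longrightarrow> fb_mul B (fb_add B a a') c = fb_add B (fb_mul B a c) (fb_mul B a' c)"
  using mul_add0 by blast
lemma mul_add_r: "fb_deg B a = fb_deg B a' \<Longrightarrow> fb_mul B c (fb_add B a a') = fb_add B (fb_mul B c a) (fb_mul B c a')"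
  using mul_add0 by blast
lemma mul_sm_l[simp]: "fb_mul B (fb_smul B k a) c = fb_smul B k (fb_mul B a c)" using mul_sm0 by blast
lemma mul_sm_r[simp]: "fb_mul B c (fb_smul B k a) = fb_smul B k (fb_mul B c a)" using mul_sm0 by blast
lemma mul_assoc: "fb_mul B (fb_mul B a b) c = fb_mul B a (fb_mul B b c)" using mul_assoc0 by blast
lemma norm_mul: "fb_norm B (fb_mul B b c) \<le> fb_norm B b * fb_norm B c" using norm_mul0 by blast
lemma deg_star[simp]: "fb_deg B (fb_star B b) = inv\<^bsub>G\<^esub> (fb_deg B b)" using deg_star0 by blast
lemma star_add: "fb_deg B a = fb_deg B a' \<Longrightarrow> fb_star B (fb_add B a a') = fb_add B (fb_star B a) (fb_star B a')"
  using star_add0 by blast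
lemma star_sm[simp]: "fb_star B (fb_smul B k a) = fb_smul B (cnj k) (fb_star B a)" using star_sm0 by blast
lemma star_mul: "fb_star B (fb_mul B b c) = fb_mul B (fb_star B c) (fb_star B b)" using star_mul0 by blast
lemma star_star[simp]: "fb_star B (fb_star B b) = b" using star_star0 by blast
lemma cstar: "fb_norm B (fb_mul B (fb_star B b) b) = (fb_norm B b)\<^sup>2" using cstar0 by blast
lemma pos: "fb_pos G B (fb_mul B (fb_star B b) b)" using pos0 by blast

abbreviation "e \<equiv> \<one>\<^bsub>G\<^esub>"
abbreviation "E \<equiv> fibre B e"

lemma e_car[simp]: "e \<in> carrier G" by (simp add: group.is_monoid group_G monoid.one_closed)
lemma ee[simp]: "e \<otimes>\<^bsub>G\<^esub> e = e" by (simp add: group.is_monoid group_G monoid.l_one)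
lemma inv_e[simp]: "inv\<^bsub>G\<^esub> e = e" by (simp add: group.inv_eq_1_iff group_G)
lemma l_one[simp]: "g \<in> carrier G \<Longrightarrow> e \<otimes>\<^bsub>G\<^esub> g = g" by (simp add: group.is_monoid group_G monoid.l_one)
lemma r_one[simp]: "g \<in> carrier G \<Longrightarrow> g \<otimes>\<^bsub>G\<^esub> e = g" by (simp add: group.is_monoid group_G monoid.r_one)
lemma l_inv[simp]: "g \<in> carrier G \<Longrightarrow> inv\<^bsub>G\<^esub> g \<otimes>\<^bsub>G\<^esub> g = e" by (simp add: group.l_inv group_G)
lemma r_inv[simp]: "g \<in> carrier G \<Longrightarrow> g \<otimes>\<^bsub>G\<^esub> inv\<^bsub>G\<^esub> g = e" by (simp add: group.r_inv group_G)
lemma inv_inv[simp]: "g \<in> carrier G \<Longrightarrow> inv\<^bsub>G\<^esub> (inv\<^bsub>G\<^esub> g) = g" by (simp add: group.inv_inv group_G)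
lemma inv_car[simp]: "g \<in> carrier G \<Longrightarrow> inv\<^bsub>G\<^esub> g \<in> carrier G" by (simp add: group.inv_closed group_G)

lemma fibre_iff: "b \<in> fibre B g \<longleftrightarrow> fb_deg B b = g" unfolding fibre_def by simp

sublocale E: bfib E "fb_add B" "fb_smul B" "fb_zero B e" "fb_norm B"
  using bfibB[OF e_car] .

lemma in_own: "b \<in> fibre B (fb_deg B b)" by (simp add: fibre_iff)

lemma deg_sm[simp]: "fb_deg B (fb_smul B k a) = fb_deg B a"
  using bfib.sm_in[OF bfibB[OF deg_car] in_own[of a]] by (simp add: fibre_iff)
lemma deg_add[simp]: "fb_deg B a = fb_deg B b \<Longrightarrow> fb_deg B (fb_add B a b) = fb_deg B a"
  using bfib.ad_in[OF bfibB[OF deg_car] in_own[of a], of b] by (simp add: fibre_iff)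

lemma norm_nonneg[simp]: "fb_norm B b \<ge> 0"
  using bfib.nr_nonneg[OF bfibB[OF deg_car] in_own] .

lemma mul_E[simp]: "a \<in> E \<Longrightarrow> b \<in> E \<Longrightarrow> fb_mul B a b \<in> E" by (simp add: fibre_iff)
lemma star_E[simp]: "a \<in> E \<Longrightarrow> fb_star B a \<in> E" by (simp add: fibre_iff)

lemma mul_sub_l: "a \<in> E \<Longrightarrow> a' \<in> E \<Longrightarrow> fb_mul B (E.sub a a') c = E.sub (fb_mul B a c) (fb_mul B a' c)"
  unfolding E.sub_def by (simp add: mul_add_l fibre_iff)
lemma mul_sub_r: "a \<in> E \<Longrightarrow> a' \<in> E \<Longrightarrow> fb_mul B c (E.sub a a') = E.sub (fb_mul B c a) (fb_mul B c a')"
  unfolding E.sub_def by (simp add: mul_add_r fibre_iff)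
lemma star_sub: "a \<in> E \<Longrightarrow> a' \<in> E \<Longrightarrow> fb_star B (E.sub a a') = E.sub (fb_star B a) (fb_star B a')"
  unfolding E.sub_def by (simp add: star_add fibre_iff)

lemma norm_star_le: "fb_norm B b \<le> fb_norm B (fb_star B b)"
proof (cases "fb_norm B b = 0")
  case True then show ?thesis by simp
next
  case False
  then have p: "fb_norm B b > 0" using norm_nonneg[of b] by linarith
  have "(fb_norm B b)\<^sup>2 \<le> fb_norm B (fb_star B b) * fb_norm B b" using cstar[of b] norm_mul by metis
  then show ?thesis using p by (simp add: power2_eq_square)
qed

lemma norm_star[simp]: "fb_norm B (fb_star B b) = fb_norm B b"
  using norm_star_le[of b] norm_star_le[of "fb_star B b"] by simp

end


context fctx begin

definition ff :: "'b \<Rightarrow> 'b \<Rightarrow> 'b" where "ff a s = fb_smul B (-1/2) (fb_add B a (fb_mul B s s))"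

lemma ff_E[simp]: "a \<in> E \<Longrightarrow> s \<in> E \<Longrightarrow> ff a s \<in> E" unfolding ff_def by simp

lemma sq_diff: assumes "s \<in> E" "t \<in> E"
  shows "E.sub (fb_mul B s s) (fb_mul B t t) = fb_add B (fb_mul B s (E.sub s t)) (fb_mul B (E.sub s t) t)"
  using assms by (simp add: mul_sub_l mul_sub_r E.sub_trans)

lemma norm_sq_diff: assumes "s \<in> E" "t \<in> E"
  shows "fb_norm B (E.sub (fb_mul B s s) (fb_mul B t t)) \<le> (fb_norm B s + fb_norm B t) * fb_norm B (E.sub s t)"
proof -
  have "fb_norm B (E.sub (fb_mul B s s) (fb_mul B t t)) \<le> fb_norm B (fb_mul B s (E.sub s t)) + fb_norm B (fb_mul B (E.sub s t) t)"
    unfolding sq_diff[OF assms] using assms by (intro E.nr_tri) simp_all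
  also have "\<dots> \<le> fb_norm B s * fb_norm B (E.sub s t) + fb_norm B (E.sub s t) * fb_norm B t"
    by (intro add_mono norm_mul)
  finally show ?thesis by (simp add: algebra_simps)
qed

lemma ff_contr: assumes "a \<in> E" "s \<in> E" "t \<in> E"
  shows "fb_norm B (E.sub (ff a s) (ff a t)) \<le> (fb_norm B s + fb_norm B t) / 2 * fb_norm B (E.sub s t)"
proof -
  have "E.sub (ff a s) (ff a t) = fb_smul B (-1/2) (E.sub (fb_mul B s s) (fb_mul B t t))"
    unfolding ff_def using assms by (simp add: E.sub_sm E.sub_ad_cancel)
  then have "fb_norm B (E.sub (ff a s) (ff a t)) = fb_norm B (E.sub (fb_mul B s s) (fb_mul B t t)) / 2"
    using assms by simp
  also have "\<dots> \<le> (fb_norm B s + fb_norm B t) * fb_norm B (E.sub s t) / 2"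
    using norm_sq_diff[OF assms(2,3)] by simp
  finally show ?thesis by simp
qed

lemma ff_bound: assumes "a \<in> E" "s \<in> E" "fb_norm B a \<le> 1/4" "fb_norm B s \<le> 1/4"
  shows "fb_norm B (ff a s) \<le> 1/4"
proof -
  have "fb_norm B (fb_mul B s s) \<le> 1/16"
  proof -
    have "fb_norm B (fb_mul B s s) \<le> fb_norm B s * fb_norm B s" by (rule norm_mul)
    also have "\<dots> \<le> (1/4) * (1/4)" using assms(4) by (intro mult_mono) simp_all
    finally show ?thesis by simp
  qed
  moreover have "fb_norm B (fb_add B a (fb_mul B s s)) \<le> fb_norm B a + fb_norm B (fb_mul B s s)"
    using assms by (intro E.nr_tri) simp_all
  ultimately have "fb_norm B (fb_add B a (fb_mul B s s)) \<le> 1/2" using assms by linarith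
  then show ?thesis unfolding ff_def using assms by simp
qed

definition sq where "sq a n = (ff a ^^ n) (fb_zero B e)"

lemma sq_0: "sq a 0 = fb_zero B e" unfolding sq_def by simp
lemma sq_Suc: "sq a (Suc n) = ff a (sq a n)" unfolding sq_def by simp

lemma sq_E[simp]: "a \<in> E \<Longrightarrow> sq a n \<in> E"
  by (induction n) (simp_all add: sq_0 sq_Suc)

lemma sq_bound: assumes "a \<in> E" "fb_norm B a \<le> 1/4" shows "fb_norm B (sq a n) \<le> 1/4"
proof (induction n)
  case 0 then show ?case by (simp add: sq_0)
next
  case (Suc n) then show ?case unfolding sq_Suc using assms by (intro ff_bound) simp_all
qed

lemma sq_step: assumes "a \<in> E" "fb_norm B a \<le> 1/4"
  shows "fb_norm B (E.sub (sq a (Suc n)) (sq a n)) \<le> (1/2)^n"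
proof (induction n)
  case 0
  have "fb_norm B (sq a 1) \<le> 1/4" using sq_bound assms by blast
  then show ?case using assms by (simp add: sq_0)
next
  case (Suc n)
  have "fb_norm B (E.sub (sq a (Suc (Suc n))) (sq a (Suc n)))
     \<le> (fb_norm B (sq a (Suc n)) + fb_norm B (sq a n)) / 2 * fb_norm B (E.sub (sq a (Suc n)) (sq a n))"
    unfolding sq_Suc[of a "Suc n"] sq_Suc[of a n] using assms by (intro ff_contr) (simp_all add: sq_Suc)
  also have "\<dots> \<le> 1/2 * (1/2)^n"
  proof (rule mult_mono)
    show "(fb_norm B (sq a (Suc n)) + fb_norm B (sq a n)) / 2 \<le> 1/2"
      using sq_bound[OF assms, of n] sq_bound[OF assms, of "Suc n"] by simp
    show "fb_norm B (E.sub (sq a (Suc n)) (sq a n)) \<le> (1/2)^n" using Suc .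
  qed simp_all
  finally show ?case by simp
qed

lemma sq_cauchy: assumes "a \<in> E" "fb_norm B a \<le> 1/4" "n \<le> m"
  shows "fb_norm B (E.sub (sq a m) (sq a n)) \<le> 2 * (1/2)^n - 2 * (1/2)^m"
  using assms(3)
proof (induction m rule: dec_induct)
  case base
  then show ?case using assms by simp
next
  case (step m)
  have "fb_norm B (E.sub (sq a (Suc m)) (sq a n)) \<le> fb_norm B (E.sub (sq a (Suc m)) (sq a m)) + fb_norm B (E.sub (sq a m) (sq a n))"
    using assms by (intro E.nr_sub_tri) simp_all
  also have "\<dots> \<le> (1/2)^m + (2 * (1/2)^n - 2 * (1/2)^m)"
    using sq_step[OF assms(1,2), of m] step.IH by linarith
  finally show ?case by simp
qed

lemma sq_cauchy2: assumes "a \<in> E" "fb_norm B a \<le> 1/4" "N \<le> m" "N \<le> n"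
  shows "fb_norm B (E.sub (sq a m) (sq a n)) \<le> 2 * (1/2)^N"
proof (cases "n \<le> m")
  case True
  have "fb_norm B (E.sub (sq a m) (sq a n)) \<le> 2 * (1/2)^n - 2 * (1/2)^m" using sq_cauchy assms True by blast
  also have "\<dots> \<le> 2 * (1/2)^N"
  proof -
    have "(1/2::real)^n \<le> (1/2)^N" using assms(4) by (intro power_decreasing) simp_all
    moreover have "(0::real) \<le> (1/2)^m" by simp
    ultimately show ?thesis by linarith
  qed
  finally show ?thesis .
next
  case False
  have "fb_norm B (E.sub (sq a m) (sq a n)) = fb_norm B (E.sub (sq a n) (sq a m))"
    using assms by (simp add: E.nr_sub_sym)
  also have "\<dots> \<le> 2 * (1/2)^m - 2 * (1/2)^n" using sq_cauchy assms False by simp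
  also have "\<dots> \<le> 2 * (1/2)^N"
  proof -
    have "(1/2::real)^m \<le> (1/2)^N" using assms(3) by (intro power_decreasing) simp_all
    moreover have "(0::real) \<le> (1/2)^n" by simp
    ultimately show ?thesis by linarith
  qed
  finally show ?thesis .
qed

lemma sq_lim: assumes "a \<in> E" "fb_norm B a \<le> 1/4"
  shows "\<exists>l\<in>E. (\<lambda>n. fb_norm B (E.sub (sq a n) l)) \<longlonglongrightarrow> 0"
proof -
  have "\<forall>\<epsilon>>0. \<exists>N. \<forall>m\<ge>N. \<forall>n\<ge>N. fb_norm B (fb_add B (sq a m) (fb_smul B (-1) (sq a n))) < \<epsilon>"
  proof (intro allI impI)
    fix \<epsilon> :: real assume "\<epsilon> > 0"
    then obtain N where N: "(1/2::real)^N < \<epsilon>/2" using real_arch_pow_inv[of "\<epsilon>/2" "1/2"] by auto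
    show "\<exists>N. \<forall>m\<ge>N. \<forall>n\<ge>N. fb_norm B (fb_add B (sq a m) (fb_smul B (-1) (sq a n))) < \<epsilon>"
    proof (intro exI[of _ N] allI impI)
      fix m n assume "N \<le> m" "N \<le> n"
      then have "fb_norm B (E.sub (sq a m) (sq a n)) \<le> 2 * (1/2)^N" using sq_cauchy2[OF assms] by blast
      then show "fb_norm B (fb_add B (sq a m) (fb_smul B (-1) (sq a n))) < \<epsilon>" using N unfolding E.sub_def by linarith
    qed
  qed
  then show ?thesis using E.complete[of "sq a"] assms unfolding E.sub_def by simp
qed

lemma ff_star: assumes "a \<in> E" "s \<in> E" "fb_star B a = a" "fb_star B s = s"
  shows "fb_star B (ff a s) = ff a s"
  unfolding ff_def using assms by (simp add: star_add fibre_iff star_mul)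

lemma sq_star: assumes "a \<in> E" "fb_star B a = a" shows "fb_star B (sq a n) = sq a n"
proof (induction n)
  case 0 show ?case unfolding sq_0 using E.sm_zero[of "fb_zero B e"]
    by (metis E.z_in star_sm complex_cnj_zero E.sm_zero star_E)
next
  case (Suc n) then show ?case unfolding sq_Suc using assms by (intro ff_star) simp_all
qed

lemma ff_comm: assumes "h \<in> E" "s \<in> E" "fb_mul B h s = fb_mul B s h"
  shows "fb_mul B h (ff (fb_mul B h h) s) = fb_mul B (ff (fb_mul B h h) s) h"
proof -
  have 1: "fb_mul B h (fb_mul B h h) = fb_mul B (fb_mul B h h) h" by (simp add: mul_assoc)
  have 2: "fb_mul B h (fb_mul B s s) = fb_mul B (fb_mul B s s) h"
    by (metis assms(3) mul_assoc)
  show ?thesis unfolding ff_def using assms 1 2 by (simp add: mul_add_l mul_add_r fibre_iff)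
qed

lemma sq_comm: assumes "h \<in> E" shows "fb_mul B h (sq (fb_mul B h h) n) = fb_mul B (sq (fb_mul B h h) n) h"
proof (induction n)
  case 0
  have "fb_mul B h (fb_zero B e) = fb_zero B e" "fb_mul B (fb_zero B e) h = fb_zero B e"
    using mul_sm_r[of h 0 "fb_zero B e"] mul_sm_l[of 0 "fb_zero B e" h] assms by simp_all
  then show ?case by (simp add: sq_0)
next
  case (Suc n) then show ?case unfolding sq_Suc using assms by (intro ff_comm) simp_all
qed

lemma lim_zero:
  fixes c :: real
  assumes "\<And>n. c \<le> g n" "g \<longlonglongrightarrow> 0" shows "c \<le> 0"
  using LIMSEQ_le_const[OF assms(2)] assms(1) by blast

lemma E_eq_lim: assumes "x \<in> E" "y \<in> E" "\<And>n. fb_norm B (E.sub x y) \<le> g n" "g \<longlonglongrightarrow> 0"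
  shows "x = y"
proof -
  have "fb_norm B (E.sub x y) \<le> 0" using lim_zero assms by blast
  then have "fb_norm B (E.sub x y) = 0" using norm_nonneg[of "E.sub x y"] by linarith
  then have "E.sub x y = fb_zero B e" using E.nr_zero_iff[of "E.sub x y"] assms by simp
  then show ?thesis using E.sub_eq_z assms by blast
qed

lemma sqrt_exists: assumes "h \<in> E" "fb_star B h = h" "fb_norm B h \<le> 1/2"
  shows "\<exists>l\<in>E. fb_star B l = l \<and> fb_mul B h l = fb_mul B l h \<and>
     l = ff (fb_mul B h h) l"
proof -
  define a where "a = fb_mul B h h"
  have aE: "a \<in> E" unfolding a_def using assms by simp
  have astar: "fb_star B a = a" unfolding a_def using assms by (simp add: star_mul)
  have an: "fb_norm B a \<le> 1/4"
  proof -
    have "fb_norm B a \<le> fb_norm B h * fb_norm B h" unfolding a_def by (rule norm_mul)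
    also have "\<dots> \<le> (1/2) * (1/2)" using assms(3) by (intro mult_mono) simp_all
    finally show ?thesis by simp
  qed
  obtain l where lE: "l \<in> E" and lim: "(\<lambda>n. fb_norm B (E.sub (sq a n) l)) \<longlonglongrightarrow> 0"
    using sq_lim[OF aE an] by blast
  let ?d = "\<lambda>n. fb_norm B (E.sub (sq a n) l)"
  have "fb_star B l = l"
  proof (rule E_eq_lim)
    show "fb_star B l \<in> E" "l \<in> E" using lE by simp_all
    fix n
    have "fb_norm B (E.sub (fb_star B l) l) \<le> fb_norm B (E.sub (fb_star B l) (fb_star B (sq a n))) + fb_norm B (E.sub (sq a n) l)"
      using E.nr_sub_tri[of "fb_star B l" "sq a n" l] lE aE sq_star[OF aE astar, of n] by simp
    also have "fb_norm B (E.sub (fb_star B l) (fb_star B (sq a n))) = ?d n"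
      using lE aE by (simp add: star_sub[symmetric] E.nr_sub_sym)
    finally show "fb_norm B (E.sub (fb_star B l) l) \<le> 2 * ?d n" by simp
  next
    show "(\<lambda>n. 2 * ?d n) \<longlonglongrightarrow> 0" using tendsto_mult_right_zero[OF lim] by simp
  qed
  moreover have "fb_mul B h l = fb_mul B l h"
  proof (rule E_eq_lim)
    show "fb_mul B h l \<in> E" "fb_mul B l h \<in> E" using lE assms by simp_all
    fix n
    have "fb_norm B (E.sub (fb_mul B h l) (fb_mul B l h)) \<le>
       fb_norm B (E.sub (fb_mul B h l) (fb_mul B h (sq a n))) + fb_norm B (E.sub (fb_mul B (sq a n) h) (fb_mul B l h))"
      using E.nr_sub_tri[of "fb_mul B h l" "fb_mul B h (sq a n)" "fb_mul B l h"] lE aE assms sq_comm[OF assms(1), of n]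
      unfolding a_def by simp
    also have "\<dots> = fb_norm B (fb_mul B h (E.sub l (sq a n))) + fb_norm B (fb_mul B (E.sub (sq a n) l) h)"
      using lE aE by (simp add: mul_sub_l mul_sub_r)
    also have "\<dots> \<le> fb_norm B h * fb_norm B (E.sub l (sq a n)) + fb_norm B (E.sub (sq a n) l) * fb_norm B h"
      by (intro add_mono norm_mul)
    also have "\<dots> = (2 * fb_norm B h) * ?d n" using lE aE by (simp add: E.nr_sub_sym algebra_simps)
    finally show "fb_norm B (E.sub (fb_mul B h l) (fb_mul B l h)) \<le> (2 * fb_norm B h) * ?d n" .
  next
    show "(\<lambda>n. (2 * fb_norm B h) * ?d n) \<longlonglongrightarrow> 0" using tendsto_mult_right_zero[OF lim] by simp
  qed
  moreover have "l = ff a l"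
  proof (rule E_eq_lim)
    show "l \<in> E" "ff a l \<in> E" using lE aE by simp_all
    fix n
    have "fb_norm B (E.sub l (ff a l)) \<le> fb_norm B (E.sub l (sq a (Suc n))) + fb_norm B (E.sub (ff a (sq a n)) (ff a l))"
      using E.nr_sub_tri[of l "sq a (Suc n)" "ff a l"] lE aE by (simp add: sq_Suc)
    also have "\<dots> \<le> ?d (Suc n) + (fb_norm B (sq a n) + fb_norm B l) / 2 * ?d n"
      using ff_contr[OF aE sq_E[OF aE, of n] lE] lE aE by (simp add: E.nr_sub_sym)
    also have "\<dots> \<le> ?d (Suc n) + (1/4 + fb_norm B l) / 2 * ?d n"
      using sq_bound[OF aE an, of n] lE aE by (intro add_mono mult_right_mono) (simp_all add: E.nr_nonneg)
    finally show "fb_norm B (E.sub l (ff a l)) \<le> ?d (Suc n) + (1/4 + fb_norm B l) / 2 * ?d n" .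
  next
    show "(\<lambda>n. ?d (Suc n) + (1/4 + fb_norm B l) / 2 * ?d n) \<longlonglongrightarrow> 0"
    proof -
      have "(\<lambda>n. ?d (Suc n) + (1/4 + fb_norm B l) / 2 * ?d n) \<longlonglongrightarrow> 0 + (1/4 + fb_norm B l) / 2 * 0"
        by (intro tendsto_add LIMSEQ_Suc[OF lim] tendsto_mult tendsto_const lim)
      then show ?thesis by simp
    qed
  qed
  ultimately show ?thesis using lE unfolding a_def by blast
qed

end


lemma (in bfib) ad_sm_cancel: assumes "P \<in> F" "Q \<in> F" "R \<in> F" "\<alpha> + \<beta> = 0"
  shows "ad (ad P (sm \<alpha> R)) (ad (sm \<beta> R) Q) = ad P Q"
proof -
  have "ad (ad P (sm \<alpha> R)) (ad (sm \<beta> R) Q) = ad P (ad (ad (sm \<alpha> R) (sm \<beta> R)) Q)"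
    using assms by (simp add: ad_assoc)
  also have "ad (sm \<alpha> R) (sm \<beta> R) = z" using sm_add[OF assms(3), of \<alpha> \<beta>] assms by simp
  finally show ?thesis using assms by simp
qed

lemma (in bfib) sub_ad_left: assumes "y \<in> F" "w \<in> F" shows "sub (ad y w) y = w"
proof -
  have "ad (ad y w) (sm (-1) y) = ad (ad y (sm (-1) y)) w" using assms by (metis ad_assoc ad_comm sm_in)
  then show ?thesis using assms unfolding sub_def by simp
qed

lemma (in bfib) ad_self: "a \<in> F \<Longrightarrow> ad a a = sm 2 a"
  using sm_add[of a 1 1] by simp

lemma (in bfib) polar_alg: assumes "A \<in> F" "C \<in> F" "D \<in> F"
  shows "sub (ad (ad A C) (ad C D)) (ad (ad A (sm (-1) C)) (ad (sm (-1) C) D)) = sm 4 C"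
proof -
  have c: "ad (sm (-1) C) (sm 2 C) = C" using sm_add[OF assms(2), of "-1" 2] assms by simp
  have f: "sm 4 C = ad (sm 2 C) (sm 2 C)" using sm_add[OF assms(2), of 2 2] by simp
  have "ad (ad (ad A (sm (-1) C)) (ad (sm (-1) C) D)) (ad (sm 2 C) (sm 2 C))
      = ad (ad A (ad (sm (-1) C) (sm 2 C))) (ad (ad (sm (-1) C) (sm 2 C)) D)"
    using assms by (simp only: ad_assoc ad_comm ad_left_comm sm_in ad_in)
  also have "\<dots> = ad (ad A C) (ad C D)" by (simp only: c)
  finally have "ad (ad (ad A (sm (-1) C)) (ad (sm (-1) C) D)) (sm 4 C) = ad (ad A C) (ad C D)" using f by simp
  then show ?thesis using sub_ad_left assms by (metis ad_in sm_in)
qed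


locale hctx = fctx G B for G :: "('g, 'm) monoid_scheme" and B :: "('g, 'b, 'z) fell_ops_scheme" +
  fixes X :: "('g, 'b, 'x, 'w) hilb_ops_scheme" and \<rho> :: "'b \<Rightarrow> 'x \<Rightarrow> 'x"
  assumes hb: "hilbert_bundle G B X" and ba: "bundle_action G B X \<rho>"
begin

lemmas hbd = hb[unfolded hilbert_bundle_def]
lemmas bad = ba[unfolded bundle_action_def]
lemmas hdeg_car0 = hbd[THEN conjunct1]
lemmas hfib0 = hbd[THEN conjunct2, THEN conjunct1]
lemmas hdeg_ract0 = hbd[THEN conjunct2, THEN conjunct2, THEN conjunct1]
lemmas ract_addx0 = hbd[THEN conjunct2, THEN conjunct2, THEN conjunct2, THEN conjunct1]
lemmas ract_addb0 = hbd[THEN conjunct2, THEN conjunct2, THEN conjunct2, THEN conjunct2, THEN conjunct1]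
lemmas ract_sm0 = hbd[THEN conjunct2, THEN conjunct2, THEN conjunct2, THEN conjunct2, THEN conjunct2, THEN conjunct1]
lemmas ip_deg0 = hbd[THEN conjunct2, THEN conjunct2, THEN conjunct2, THEN conjunct2, THEN conjunct2, THEN conjunct2, THEN conjunct1]
lemmas ip_add0 = hbd[THEN conjunct2, THEN conjunct2, THEN conjunct2, THEN conjunct2, THEN conjunct2, THEN conjunct2, THEN conjunct2, THEN conjunct1]
lemmas ip_sm0 = hbd[THEN conjunct2, THEN conjunct2, THEN conjunct2, THEN conjunct2, THEN conjunct2, THEN conjunct2, THEN conjunct2, THEN conjunct2, THEN conjunct1]
lemmas ip_ract0 = hbd[THEN conjunct2, THEN conjunct2, THEN conjunct2, THEN conjunct2, THEN conjunct2, THEN conjunct2, THEN conjunct2, THEN conjunct2, THEN conjunct2, THEN conjunct1]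
lemmas ip_star0 = hbd[THEN conjunct2, THEN conjunct2, THEN conjunct2, THEN conjunct2, THEN conjunct2, THEN conjunct2, THEN conjunct2, THEN conjunct2, THEN conjunct2, THEN conjunct2, THEN conjunct1]
lemmas ip_pos0 = hbd[THEN conjunct2, THEN conjunct2, THEN conjunct2, THEN conjunct2, THEN conjunct2, THEN conjunct2, THEN conjunct2, THEN conjunct2, THEN conjunct2, THEN conjunct2, THEN conjunct2, THEN conjunct1]
lemmas ip_def0 = hbd[THEN conjunct2, THEN conjunct2, THEN conjunct2, THEN conjunct2, THEN conjunct2, THEN conjunct2, THEN conjunct2, THEN conjunct2, THEN conjunct2, THEN conjunct2, THEN conjunct2, THEN conjunct2, THEN conjunct1]
lemmas hnorm0 = hbd[THEN conjunct2, THEN conjunct2, THEN conjunct2, THEN conjunct2, THEN conjunct2, THEN conjunct2, THEN conjunct2, THEN conjunct2, THEN conjunct2, THEN conjunct2, THEN conjunct2, THEN conjunct2, THEN conjunct2]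
lemmas rdeg0 = bad[THEN conjunct1]
lemmas radd_b0 = bad[THEN conjunct2, THEN conjunct1]
lemmas radd_x0 = bad[THEN conjunct2, THEN conjunct2, THEN conjunct1]
lemmas rsm0 = bad[THEN conjunct2, THEN conjunct2, THEN conjunct2, THEN conjunct1]
lemmas rmul0 = bad[THEN conjunct2, THEN conjunct2, THEN conjunct2, THEN conjunct2, THEN conjunct1]
lemmas radj0 = bad[THEN conjunct2, THEN conjunct2, THEN conjunct2, THEN conjunct2, THEN conjunct2, THEN conjunct1]
lemmas rract0 = bad[THEN conjunct2, THEN conjunct2, THEN conjunct2, THEN conjunct2, THEN conjunct2, THEN conjunct2]

lemma hdeg_car[simp]: "hb_deg X x \<in> carrier G" using hdeg_car0 by blast
lemma hdeg_zero[simp]: "g \<in> carrier G \<Longrightarrow> hb_deg X (hb_zero X g) = g" using hfib0 by blast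
lemma bfibX: "g \<in> carrier G \<Longrightarrow> bfib (hfibre X g) (hb_add X) (hb_smul X) (hb_zero X g) (hb_norm X)"
  unfolding bfib_def using hfib0 by blast
lemma hdeg_ract[simp]: "hb_deg X (hb_ract X x b) = hb_deg X x \<otimes>\<^bsub>G\<^esub> fb_deg B b" using hdeg_ract0 by blast
lemma ract_addx: "hb_deg X x = hb_deg X x' \<Longrightarrow> hb_ract X (hb_add X x x') b = hb_add X (hb_ract X x b) (hb_ract X x' b)"
  using ract_addx0 by blast
lemma ract_sm[simp]: "hb_ract X (hb_smul X k x) b = hb_smul X k (hb_ract X x b)"
  "hb_ract X x (fb_smul B k b) = hb_smul X k (hb_ract X x b)" using ract_sm0 by blast+
lemma ip_deg[simp]: "fb_deg B (hb_ip X x y) = inv\<^bsub>G\<^esub> (hb_deg X x) \<otimes>\<^bsub>G\<^esub> hb_deg X y" using ip_deg0 by blast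
lemma ip_add_r: "hb_deg X y = hb_deg X y' \<Longrightarrow> hb_ip X x (hb_add X y y') = fb_add B (hb_ip X x y) (hb_ip X x y')"
  using ip_add0 by blast
lemma ip_sm_r[simp]: "hb_ip X x (hb_smul X k y) = fb_smul B k (hb_ip X x y)" using ip_sm0 by blast
lemma ip_ract: "hb_ip X x (hb_ract X y b) = fb_mul B (hb_ip X x y) b" using ip_ract0 by blast
lemma ip_star[simp]: "fb_star B (hb_ip X x y) = hb_ip X y x" using ip_star0 by blast
lemma ip_pos: "fb_pos G B (hb_ip X x x)" using ip_pos0 by blast
lemma hnorm_def: "hb_norm X x = sqrt (fb_norm B (hb_ip X x x))" using hnorm0 by blast
lemma rdeg[simp]: "hb_deg X (\<rho> b x) = fb_deg B b \<otimes>\<^bsub>G\<^esub> hb_deg X x" using rdeg0 by blast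
lemma radd_b: "fb_deg B b = fb_deg B b' \<Longrightarrow> \<rho> (fb_add B b b') x = hb_add X (\<rho> b x) (\<rho> b' x)"
  using radd_b0 by blast
lemma radd_x: "hb_deg X x = hb_deg X x' \<Longrightarrow> \<rho> b (hb_add X x x') = hb_add X (\<rho> b x) (\<rho> b x')"
  using radd_x0 by blast
lemma rsm[simp]: "\<rho> (fb_smul B k b) x = hb_smul X k (\<rho> b x)" "\<rho> b (hb_smul X k x) = hb_smul X k (\<rho> b x)"
  using rsm0 by blast+
lemma rmul: "\<rho> (fb_mul B b c) x = \<rho> b (\<rho> c x)" using rmul0 by (simp add: fun_eq_iff)
lemma radj: "hb_ip X (\<rho> b x) y = hb_ip X x (\<rho> (fb_star B b) y)" using radj0 by blast

lemma hfibre_iff: "x \<in> hfibre X g \<longleftrightarrow> hb_deg X x = g" unfolding hfibre_def by simp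
lemma hin_own: "x \<in> hfibre X (hb_deg X x)" by (simp add: hfibre_iff)
lemma hdeg_sm[simp]: "hb_deg X (hb_smul X k a) = hb_deg X a"
  using bfib.sm_in[OF bfibX[OF hdeg_car] hin_own[of a]] by (simp add: hfibre_iff)
lemma hdeg_add[simp]: "hb_deg X a = hb_deg X b \<Longrightarrow> hb_deg X (hb_add X a b) = hb_deg X a"
  using bfib.ad_in[OF bfibX[OF hdeg_car] hin_own[of a], of b] by (simp add: hfibre_iff)
lemma hnorm_nonneg[simp]: "hb_norm X x \<ge> 0" by (simp add: hnorm_def)
lemma hnorm_sq: "(hb_norm X x)\<^sup>2 = fb_norm B (hb_ip X x x)" by (simp add: hnorm_def)

lemma ip_add_l: "hb_deg X y = hb_deg X y' \<Longrightarrow> hb_ip X (hb_add X y y') x = fb_add B (hb_ip X y x) (hb_ip X y' x)"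
  by (metis ip_add_r ip_deg ip_star star_add)
lemma ip_sm_l[simp]: "hb_ip X (hb_smul X k y) x = fb_smul B (cnj k) (hb_ip X y x)"
  by (metis complex_cnj_cnj ip_sm_r ip_star star_sm)

lemma ip_zero_r: "g \<in> carrier G \<Longrightarrow> hb_ip X x (hb_zero X g) = fb_zero B (inv\<^bsub>G\<^esub> (hb_deg X x) \<otimes>\<^bsub>G\<^esub> g)"
proof -
  assume g: "g \<in> carrier G"
  have "hb_zero X g = hb_smul X 0 (hb_zero X g)" using bfib.sm_zero[OF bfibX[OF g], of "hb_zero X g"] bfib.z_in[OF bfibX[OF g]] by simp
  then have "hb_ip X x (hb_zero X g) = fb_smul B 0 (hb_ip X x (hb_zero X g))" by (metis ip_sm_r)
  also have "\<dots> = fb_zero B (inv\<^bsub>G\<^esub> (hb_deg X x) \<otimes>\<^bsub>G\<^esub> g)"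
    using bfib.sm_zero[OF bfibB[OF deg_car] in_own[of "hb_ip X x (hb_zero X g)"]] g by simp
  finally show ?thesis .
qed

lemma rho_zero: "g \<in> carrier G \<Longrightarrow> \<rho> (fb_zero B g) y = hb_zero X (g \<otimes>\<^bsub>G\<^esub> hb_deg X y)"
proof -
  assume g: "g \<in> carrier G"
  have "fb_zero B g = fb_smul B 0 (fb_zero B g)" using bfib.sm_zero[OF bfibB[OF g], of "fb_zero B g"] bfib.z_in[OF bfibB[OF g]] by simp
  then have "\<rho> (fb_zero B g) y = hb_smul X 0 (\<rho> (fb_zero B g) y)" by (metis rsm(1))
  also have "\<dots> = hb_zero X (g \<otimes>\<^bsub>G\<^esub> hb_deg X y)"
    using bfib.sm_zero[OF bfibX[OF hdeg_car] hin_own[of "\<rho> (fb_zero B g) y"]] g by simp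
  finally show ?thesis .
qed

end


context hctx begin

lemma ipE[simp]: "hb_deg X u = hb_deg X v \<Longrightarrow> hb_ip X u v \<in> E"
  by (simp add: fibre_iff)

lemma ip_expand: assumes "hb_deg X u = hb_deg X v"
  shows "hb_ip X (hb_add X u (hb_smul X \<alpha> v)) (hb_add X u (hb_smul X \<alpha> v)) =
    fb_add B (fb_add B (hb_ip X u u) (fb_smul B \<alpha> (hb_ip X u v)))
             (fb_add B (fb_smul B (cnj \<alpha>) (hb_ip X v u)) (fb_smul B (cnj \<alpha> * \<alpha>) (hb_ip X v v)))"
proof -
  let ?w = "hb_add X u (hb_smul X \<alpha> v)"
  have dw: "hb_deg X ?w = hb_deg X u" using assms by simp
  have "hb_ip X ?w ?w = fb_add B (hb_ip X u ?w) (hb_ip X (hb_smul X \<alpha> v) ?w)"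
    using assms by (simp add: ip_add_l)
  also have "hb_ip X u ?w = fb_add B (hb_ip X u u) (fb_smul B \<alpha> (hb_ip X u v))"
    using assms by (simp add: ip_add_r)
  also have "hb_ip X (hb_smul X \<alpha> v) ?w = fb_add B (fb_smul B (cnj \<alpha>) (hb_ip X v u)) (fb_smul B (cnj \<alpha> * \<alpha>) (hb_ip X v v))"
    using assms by (simp add: ip_add_r E.sm_ad)
  finally show ?thesis .
qed

lemma iso_half: assumes "h \<in> E" "fb_star B h = h" "fb_norm B h \<le> 1/2"
  shows "hb_norm X (\<rho> h y) \<le> hb_norm X y"
proof -
  obtain l where lE: "l \<in> E" and ls: "fb_star B l = l" and hl: "fb_mul B h l = fb_mul B l h"
    and lf: "l = ff (fb_mul B h h) l"
    using sqrt_exists[OF assms] by blast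
  define d where "d = hb_deg X y"
  have dc: "d \<in> carrier G" unfolding d_def by simp
  have hd: "fb_deg B h = e" "fb_deg B l = e" using assms lE by (simp_all add: fibre_iff)
  define p where "p = \<rho> h y"
  define q where "q = hb_add X y (\<rho> l y)"
  have dp: "hb_deg X p = d" and dq: "hb_deg X q = d" unfolding p_def q_def d_def using hd by simp_all
  define Y where "Y = hb_ip X y y"
  define L where "L = hb_ip X y (\<rho> l y)"
  define HH where "HH = hb_ip X y (\<rho> (fb_mul B h h) y)"
  define LL where "LL = hb_ip X y (\<rho> (fb_mul B l l) y)"
  have inE: "Y \<in> E" "L \<in> E" "HH \<in> E" "LL \<in> E" unfolding Y_def L_def HH_def LL_def using hd
    by (simp_all add: fibre_iff)
  have C1: "hb_ip X p q = hb_ip X q p"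
  proof -
    have "hb_ip X p q = fb_add B (hb_ip X p y) (hb_ip X p (\<rho> l y))"
      unfolding q_def using hd by (simp add: ip_add_r)
    also have "hb_ip X p y = hb_ip X y p" unfolding p_def using assms(2) by (simp add: radj)
    also have "hb_ip X p (\<rho> l y) = hb_ip X y (\<rho> (fb_mul B h l) y)" unfolding p_def using assms(2) by (simp add: radj rmul)
    also have "fb_add B (hb_ip X y p) (hb_ip X y (\<rho> (fb_mul B h l) y)) = hb_ip X q p"
    proof -
      have "hb_ip X q p = fb_add B (hb_ip X y p) (hb_ip X (\<rho> l y) p)"
        unfolding q_def using hd by (simp add: ip_add_l)
      also have "hb_ip X (\<rho> l y) p = hb_ip X y (\<rho> (fb_mul B l h) y)" unfolding p_def using ls by (simp add: radj rmul)
      finally show ?thesis using hl by simp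
    qed
    finally show ?thesis .
  qed
  have C2: "fb_add B (hb_ip X p p) (hb_ip X q q) = Y"
  proof -
    have pp: "hb_ip X p p = HH" unfolding p_def HH_def using assms(2) by (simp add: radj rmul)
    have "hb_ip X q q = fb_add B (hb_ip X y q) (hb_ip X (\<rho> l y) q)"
      unfolding q_def using hd by (simp add: ip_add_l)
    also have "hb_ip X y q = fb_add B Y L" unfolding q_def Y_def L_def using hd by (simp add: ip_add_r)
    also have "hb_ip X (\<rho> l y) q = fb_add B L LL" unfolding q_def L_def LL_def using hd ls
      by (simp add: ip_add_r radd_x radj rmul)
    finally have qq: "hb_ip X q q = fb_add B (fb_add B Y L) (fb_add B L LL)" .
    define W where "W = fb_add B (fb_mul B h h) (fb_mul B l l)"
    have WE: "W \<in> E" unfolding W_def using assms lE by simp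
    have "fb_add B l l = fb_smul B (-1) W" using lf E.sm_half_twice[OF WE] unfolding ff_def W_def by metis
    then have Wz: "fb_add B W (fb_add B l l) = fb_zero B e" using WE by simp
    have "hb_ip X y (\<rho> (fb_add B W (fb_add B l l)) y) = fb_add B (fb_add B HH LL) (fb_add B L L)"
      unfolding W_def HH_def LL_def L_def using hd by (simp add: radd_b ip_add_r)
    moreover have "hb_ip X y (\<rho> (fb_add B W (fb_add B l l)) y) = fb_zero B e"
      unfolding Wz using dc by (simp add: rho_zero ip_zero_r d_def)
    ultimately have z: "fb_add B (fb_add B HH LL) (fb_add B L L) = fb_zero B e" by simp
    have "fb_add B HH (fb_add B (fb_add B Y L) (fb_add B L LL)) = fb_add B Y (fb_add B (fb_add B HH LL) (fb_add B L L))"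
      using inE by (simp only: E.ad_assoc E.ad_comm E.ad_left_comm E.ad_in)
    also have "\<dots> = Y" using z inE by simp
    finally show ?thesis using pp qq by simp
  qed
  have iso: "hb_norm X (hb_add X p (hb_smul X \<alpha> q)) = hb_norm X y" if "cnj \<alpha> * \<alpha> = 1" "\<alpha> + cnj \<alpha> = 0" for \<alpha>
  proof -
    have "hb_ip X (hb_add X p (hb_smul X \<alpha> q)) (hb_add X p (hb_smul X \<alpha> q)) =
      fb_add B (fb_add B (hb_ip X p p) (fb_smul B \<alpha> (hb_ip X p q)))
             (fb_add B (fb_smul B (cnj \<alpha>) (hb_ip X p q)) (hb_ip X q q))"
      using ip_expand[of p q \<alpha>] dp dq C1 that by simp
    also have "\<dots> = fb_add B (hb_ip X p p) (hb_ip X q q)"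
      using dp dq that by (intro E.ad_sm_cancel) simp_all
    finally show ?thesis using C2 unfolding hnorm_def Y_def by simp
  qed
  interpret Xd: bfib "hfibre X d" "hb_add X" "hb_smul X" "hb_zero X d" "hb_norm X" using bfibX[OF dc] .
  have pin: "p \<in> hfibre X d" "q \<in> hfibre X d" using dp dq by (simp_all add: hfibre_iff)
  have "hb_add X (hb_add X p (hb_smul X \<i> q)) (hb_add X p (hb_smul X (-\<i>) q)) =
        hb_add X (hb_add X p p) (hb_add X (hb_smul X \<i> q) (hb_smul X (-\<i>) q))"
    using pin by (intro Xd.ad4) simp_all
  also have "hb_add X (hb_smul X \<i> q) (hb_smul X (-\<i>) q) = hb_zero X d"
    using Xd.sm_add[OF pin(2), of \<i> "-\<i>"] pin by simp
  also have "hb_add X p p = hb_smul X 2 p" using Xd.ad_self pin by simp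
  finally have sum: "hb_add X (hb_add X p (hb_smul X \<i> q)) (hb_add X p (hb_smul X (-\<i>) q)) = hb_smul X 2 p"
    using pin by simp
  have "2 * hb_norm X p = hb_norm X (hb_smul X 2 p)" using pin by simp
  also have "\<dots> \<le> hb_norm X (hb_add X p (hb_smul X \<i> q)) + hb_norm X (hb_add X p (hb_smul X (-\<i>) q))"
    unfolding sum[symmetric] using pin by (intro Xd.nr_tri) simp_all
  also have "\<dots> = 2 * hb_norm X y" using iso[of \<i>] iso[of "-\<i>"] by simp
  finally show ?thesis unfolding p_def by simp
qed

lemma iso_one: assumes "k \<in> E" "fb_star B k = k" "fb_norm B k \<le> 1"
  shows "hb_norm X (\<rho> k y) \<le> 2 * hb_norm X y"
proof -
  define h where "h = fb_smul B (1/2) k"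
  have "h \<in> E" "fb_star B h = h" "fb_norm B h \<le> 1/2" unfolding h_def using assms by simp_all
  then have i: "hb_norm X (\<rho> h y) \<le> hb_norm X y" by (rule iso_half)
  have "k = fb_smul B 2 h" unfolding h_def using assms by simp
  then have "\<rho> k y = hb_smul X 2 (\<rho> h y)" by simp
  moreover have "hb_norm X (hb_smul X 2 (\<rho> h y)) = 2 * hb_norm X (\<rho> h y)"
    using bfib.nr_sm[OF bfibX[OF hdeg_car] hin_own] by simp
  ultimately show ?thesis using i by simp
qed

end


context hctx begin

lemma hnorm_sm: "hb_norm X (hb_smul X c v) = cmod c * hb_norm X v"
  using bfib.nr_sm[OF bfibX[OF hdeg_car] hin_own] by simp

lemma hnorm_tri: "hb_deg X u = hb_deg X v \<Longrightarrow> hb_norm X (hb_add X u v) \<le> hb_norm X u + hb_norm X v"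
  using bfib.nr_tri[OF bfibX[OF hdeg_car] hin_own[of u], of v] by (simp add: hfibre_iff)

lemma polar: assumes "hb_deg X u = hb_deg X v" "hb_ip X u v = hb_ip X v u"
  shows "fb_norm B (hb_ip X u v) \<le> (hb_norm X u + hb_norm X v)^2 / 2"
proof -
  define C where "C = hb_ip X u v"
  define w1 where "w1 = hb_add X u (hb_smul X 1 v)"
  define w2 where "w2 = hb_add X u (hb_smul X (-1) v)"
  have CE: "C \<in> E" "hb_ip X u u \<in> E" "hb_ip X v v \<in> E" unfolding C_def using assms by simp_all
  have P: "hb_ip X w1 w1 = fb_add B (fb_add B (hb_ip X u u) C) (fb_add B C (hb_ip X v v))"
    unfolding w1_def using ip_expand[OF assms(1), of 1] assms CE unfolding C_def by simp
  have M: "hb_ip X w2 w2 = fb_add B (fb_add B (hb_ip X u u) (fb_smul B (-1) C)) (fb_add B (fb_smul B (-1) C) (hb_ip X v v))"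
    unfolding w2_def using ip_expand[OF assms(1), of "-1"] assms CE unfolding C_def by simp
  have "E.sub (hb_ip X w1 w1) (hb_ip X w2 w2) = fb_smul B 4 C"
    unfolding P M using CE by (intro E.polar_alg)
  then have "4 * fb_norm B C = fb_norm B (E.sub (hb_ip X w1 w1) (hb_ip X w2 w2))" using CE by simp
  also have "\<dots> \<le> fb_norm B (hb_ip X w1 w1) + fb_norm B (hb_ip X w2 w2)"
    unfolding E.sub_def using CE assms unfolding w1_def w2_def
    by (intro order.trans[OF E.nr_tri]) simp_all
  also have "\<dots> = (hb_norm X w1)^2 + (hb_norm X w2)^2" by (simp add: hnorm_sq)
  also have "\<dots> \<le> (hb_norm X u + hb_norm X v)^2 + (hb_norm X u + hb_norm X v)^2"
  proof (intro add_mono power_mono)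
    show "hb_norm X w1 \<le> hb_norm X u + hb_norm X v" unfolding w1_def
      using hnorm_tri[of u "hb_smul X 1 v"] assms by (simp add: hnorm_sm)
    show "hb_norm X w2 \<le> hb_norm X u + hb_norm X v" unfolding w2_def
      using hnorm_tri[of u "hb_smul X (-1) v"] assms by (simp add: hnorm_sm)
  qed simp_all
  finally show ?thesis unfolding C_def by simp
qed

lemma polar_t: assumes "hb_deg X u = hb_deg X v" "hb_ip X u v = hb_ip X v u" "t > 0"
  shows "fb_norm B (hb_ip X u v) \<le> (t * hb_norm X u + hb_norm X v / t)^2 / 2"
proof -
  let ?u = "hb_smul X (complex_of_real t) u" and ?v = "hb_smul X (complex_of_real (1/t)) v"
  have CE: "hb_ip X u v \<in> E" "hb_ip X v u \<in> E" using assms by simp_all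
  have e1: "hb_ip X ?u ?v = hb_ip X u v" using CE assms(3) by simp
  have e2: "hb_ip X ?v ?u = hb_ip X v u" using CE assms(3) by simp
  have "fb_norm B (hb_ip X ?u ?v) \<le> (hb_norm X ?u + hb_norm X ?v)^2 / 2"
    using assms by (intro polar) (simp_all add: e1 e2)
  moreover have "cmod (1 / complex_of_real t) * a = a / t" for a using assms(3) by (simp add: norm_divide)
  moreover have "cmod (complex_of_real t) = t" using assms(3) by simp
  ultimately show ?thesis using e1 by (simp add: hnorm_sm)
qed

lemma main_bound: assumes "hb_deg X x = e" "fb_norm B b = 1"
  shows "fb_norm B (hb_ip X x (\<rho> b x)) \<le> 6 * hb_norm X x * (2 * hb_norm X x + 1)"
proof -
  define X0 where "X0 = hb_norm X x"
  have X0: "X0 \<ge> 0" unfolding X0_def by simp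
  define k where "k = fb_mul B (fb_star B b) b"
  have kE: "k \<in> E" unfolding k_def by (simp add: fibre_iff)
  have ks: "fb_star B k = k" unfolding k_def by (simp add: star_mul)
  have kn: "fb_norm B k = 1" unfolding k_def using cstar assms by simp
  have rk: "hb_norm X (\<rho> k x) \<le> 2 * X0" unfolding X0_def using iso_one kE ks kn by simp
  have "fb_norm B (hb_ip X x (\<rho> k x)) \<le> (1 * hb_norm X x + hb_norm X (\<rho> k x) / 1)^2 / 2"
    using kE assms ks by (intro polar_t) (simp_all add: fibre_iff radj)
  also have "\<dots> \<le> (3 * X0)^2"
  proof -
    have "(1 * hb_norm X x + hb_norm X (\<rho> k x) / 1)^2 \<le> (3 * X0)^2"
      using rk X0 unfolding X0_def by (intro power_mono) simp_all
    moreover have "(0::real) \<le> (3 * X0)^2" by simp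
    ultimately show ?thesis by linarith
  qed
  finally have a: "fb_norm B (hb_ip X x (\<rho> k x)) \<le> (3 * X0)^2" .
  define R where "R = hb_norm X (\<rho> b x)"
  have R0: "R \<ge> 0" unfolding R_def by simp
  have "R^2 = fb_norm B (hb_ip X x (\<rho> k x))" unfolding R_def k_def by (simp add: hnorm_sq radj rmul)
  then have R: "R \<le> 3 * X0" using a R0 X0 by (metis power2_le_imp_le mult_nonneg_nonneg zero_le_numeral)
  define c where "c = hb_ip X x (\<rho> b x)"
  define v where "v = hb_ract X x c"
  have cc: "fb_mul B (fb_star B c) c = hb_ip X (\<rho> b x) v" unfolding v_def c_def by (simp add: ip_ract)
  have vn: "hb_norm X v \<le> fb_norm B c * X0"
  proof -
    have "(hb_norm X v)^2 = fb_norm B (fb_mul B (hb_ip X v x) c)" unfolding hnorm_sq v_def by (simp add: ip_ract)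
    also have "\<dots> \<le> fb_norm B (hb_ip X v x) * fb_norm B c" by (rule norm_mul)
    also have "hb_ip X v x = fb_star B (fb_mul B (hb_ip X x x) c)" unfolding v_def by (simp add: ip_ract[symmetric])
    also have "fb_norm B (fb_star B (fb_mul B (hb_ip X x x) c)) * fb_norm B c \<le> (fb_norm B (hb_ip X x x) * fb_norm B c) * fb_norm B c"
      using norm_mul[of "hb_ip X x x" c] by (intro mult_right_mono) simp_all
    also have "\<dots> = (fb_norm B c * X0)^2" unfolding X0_def hnorm_sq[symmetric] by (simp add: power2_eq_square)
    finally show ?thesis using X0 by (metis power2_le_imp_le mult_nonneg_nonneg norm_nonneg)
  qed
  define t where "t = 2 * X0 + 1"
  have t: "t > 0" "X0 / t \<le> 1/2" unfolding t_def using X0 by (simp_all add: field_simps)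
  have sa: "hb_ip X (\<rho> b x) v = hb_ip X v (\<rho> b x)"
  proof -
    have "hb_ip X v (\<rho> b x) = fb_star B (hb_ip X (\<rho> b x) v)" by simp
    also have "\<dots> = fb_star B (fb_mul B (fb_star B c) c)" using cc by simp
    also have "\<dots> = fb_mul B (fb_star B c) c" by (simp add: star_mul)
    finally show ?thesis using cc by simp
  qed
  have dv: "hb_deg X (\<rho> b x) = hb_deg X v" unfolding v_def c_def using assms by simp
  have "(fb_norm B c)^2 = fb_norm B (hb_ip X (\<rho> b x) v)" using cstar[of c] cc by simp
  also have "\<dots> \<le> (t * R + hb_norm X v / t)^2 / 2"
    unfolding R_def using t(1) dv sa by (intro polar_t)
  also have "\<dots> \<le> (t * R + hb_norm X v / t)^2" by simp
  finally have "fb_norm B c \<le> t * R + hb_norm X v / t"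
    using R0 t(1) by (metis power2_le_imp_le add_nonneg_nonneg mult_nonneg_nonneg divide_nonneg_pos hnorm_nonneg less_imp_le)
  also have "hb_norm X v / t \<le> fb_norm B c * (X0 / t)" using vn t(1) by (simp add: divide_right_mono)
  also have "\<dots> \<le> fb_norm B c * (1/2)" using t(2) by (intro mult_left_mono) simp_all
  finally have "fb_norm B c \<le> 2 * (t * R)" by simp
  also have "\<dots> \<le> 2 * (t * (3 * X0))" using R t(1) by simp
  finally show ?thesis unfolding c_def t_def X0_def by (simp add: algebra_simps)
qed

end


primrec xsum :: "('g, 'b, 'x, 'w) hilb_ops_scheme \<Rightarrow> 'g \<Rightarrow> (nat \<Rightarrow> 'x) \<Rightarrow> nat \<Rightarrow> 'x" where
  "xsum X g f 0 = hb_zero X g"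
| "xsum X g f (Suc n) = hb_add X (xsum X g f n) (f n)"

lemma fb_sum_cong: "(\<And>i. i < n \<Longrightarrow> f i = f' i) \<Longrightarrow> fb_sum B g f n = fb_sum B g f' n"
  by (induction n) simp_all

context hctx begin

lemma star_zero_e: "fb_star B (fb_zero B e) = fb_zero B e"
  by (metis E.sm_zero E.z_in complex_cnj_zero star_E star_sm)

lemma xsum_deg: "(\<And>i. i < m \<Longrightarrow> hb_deg X (f i) = e) \<Longrightarrow> hb_deg X (xsum X e f m) = e"
  by (induction m) simp_all

lemma ip_xsum_l: assumes "\<And>i. i < m \<Longrightarrow> hb_deg X (f i) = e" "hb_deg X w = e"
  shows "hb_ip X (xsum X e f m) w = fb_sum B e (\<lambda>i. hb_ip X (f i) w) m"
  using assms(1)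
proof (induction m)
  case 0
  have "hb_ip X (hb_zero X e) w = fb_star B (hb_ip X w (hb_zero X e))" by simp
  also have "\<dots> = fb_zero B e" using assms(2) by (simp add: ip_zero_r star_zero_e)
  finally show ?case by simp
next
  case (Suc m)
  then show ?case using xsum_deg[of m f] by (simp add: ip_add_l)
qed

lemma ip_xsum_r: assumes "\<And>i. i < m \<Longrightarrow> hb_deg X (f i) = e" "hb_deg X w = e"
  shows "hb_ip X w (xsum X e f m) = fb_sum B e (\<lambda>i. hb_ip X w (f i)) m"
  using assms(1)
proof (induction m)
  case 0
  then show ?case using assms(2) by (simp add: ip_zero_r)
next
  case (Suc m)
  then show ?case using xsum_deg[of m f] by (simp add: ip_add_r)
qed

lemma ip_ract_l: "hb_ip X (hb_ract X P c) Q = fb_mul B (fb_star B c) (hb_ip X P Q)"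
proof -
  have "hb_ip X (hb_ract X P c) Q = fb_star B (hb_ip X Q (hb_ract X P c))" by simp
  also have "\<dots> = fb_mul B (fb_star B c) (hb_ip X P Q)" by (simp add: ip_ract star_mul)
  finally show ?thesis .
qed

theorem result: assumes "hb_deg X x = e"
  shows "bundle_map G B (\<lambda>b. hb_ip X x (\<rho> b x)) \<and> positive_definite G B (\<lambda>b. hb_ip X x (\<rho> b x))"
proof
  define K where "K = 6 * hb_norm X x * (2 * hb_norm X x + 1)"
  show "bundle_map G B (\<lambda>b. hb_ip X x (\<rho> b x))"
    unfolding bundle_map_def
  proof (intro ballI conjI allI exI[of _ K])
    fix g assume g: "g \<in> carrier G"
    interpret Bg: bfib "fibre B g" "fb_add B" "fb_smul B" "fb_zero B g" "fb_norm B" using bfibB[OF g] .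
    show "hb_ip X x (\<rho> b x) \<in> fibre B g" if "b \<in> fibre B g" for b
      using that assms g by (simp add: fibre_iff)
    show "hb_ip X x (\<rho> (fb_add B a b) x) = fb_add B (hb_ip X x (\<rho> a x)) (hb_ip X x (\<rho> b x))"
      if "a \<in> fibre B g" "b \<in> fibre B g" for a b
      using that by (simp add: fibre_iff radd_b ip_add_r)
    show "hb_ip X x (\<rho> (fb_smul B k a) x) = fb_smul B k (hb_ip X x (\<rho> a x))" for k a by simp
    show "fb_norm B (hb_ip X x (\<rho> b x)) \<le> K * fb_norm B b" if b: "b \<in> fibre B g" for b
    proof (cases "fb_norm B b = 0")
      case True
      then have "b = fb_zero B g" using Bg.nr_zero_iff b by blast
      then have "hb_ip X x (\<rho> b x) = fb_zero B g" using g assms by (simp add: rho_zero ip_zero_r)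
      then show ?thesis using True by simp
    next
      case False
      define nb where "nb = fb_norm B b"
      have nb: "nb > 0" using False norm_nonneg[of b] unfolding nb_def by linarith
      define b' where "b' = fb_smul B (complex_of_real (1/nb)) b"
      have n1: "fb_norm B b' = 1" unfolding b'_def using b nb by (simp add: nb_def norm_divide)
      have bb: "b = fb_smul B (complex_of_real nb) b'" unfolding b'_def using b nb by simp
      have "hb_ip X x (\<rho> b x) = fb_smul B (complex_of_real nb) (hb_ip X x (\<rho> b' x))"
        by (subst bb) simp
      then have "fb_norm B (hb_ip X x (\<rho> b x)) = nb * fb_norm B (hb_ip X x (\<rho> b' x))"
        using bfib.nr_sm[OF bfibB[OF deg_car] in_own[of "hb_ip X x (\<rho> b' x)"]] nb by simp
      also have "\<dots> \<le> nb * K" unfolding K_def using main_bound[OF assms n1] nb by (intro mult_left_mono) simp_all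
      finally show ?thesis unfolding nb_def by (simp add: mult.commute)
    qed
  qed
  show "positive_definite G B (\<lambda>b. hb_ip X x (\<rho> b x))"
    unfolding positive_definite_def
  proof (intro allI impI)
    fix n and gs :: "nat \<Rightarrow> 'g" and a b :: "nat \<Rightarrow> 'b"
    assume H: "\<forall>i<n. gs i \<in> carrier G \<and> a i \<in> fibre B (gs i) \<and> b i \<in> fibre B (gs i)"
    define u where "u j = hb_ract X (\<rho> (a j) x) (fb_star B (b j))" for j
    have du: "hb_deg X (u j) = e" if "j < n" for j
      using H that assms unfolding u_def by (simp add: fibre_iff)
    define y where "y = xsum X e u n"
    have dy: "hb_deg X y = e" unfolding y_def using du xsum_deg by blast
    have "hb_ip X y y = fb_sum B e (\<lambda>i. hb_ip X (u i) y) n"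
      unfolding y_def using du dy unfolding y_def by (intro ip_xsum_l) auto
    also have "\<dots> = fb_sum B e (\<lambda>i. fb_sum B e (\<lambda>j. hb_ip X (u i) (u j)) n) n"
      using du unfolding y_def by (intro fb_sum_cong ip_xsum_r) auto
    also have "\<dots> = fb_sum B e (\<lambda>i. fb_sum B e (\<lambda>j.
              fb_mul B (fb_mul B (b i) (hb_ip X x (\<rho> (fb_mul B (fb_star B (a i)) (a j)) x))) (fb_star B (b j))) n) n"
      unfolding u_def by (intro fb_sum_cong) (simp add: ip_ract ip_ract_l radj rmul mul_assoc)
    finally show "fb_pos G B (fb_sum B e (\<lambda>i. fb_sum B e (\<lambda>j.
              fb_mul B (fb_mul B (b i) (hb_ip X x (\<rho> (fb_mul B (fb_star B (a i)) (a j)) x))) (fb_star B (b j))) n) n)"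
      using ip_pos[of y] by simp
  qed
qed

end

theorem proposition4p8:
  fixes G :: "('g, 'm) monoid_scheme"
    and B :: "('g, 'b, 'z) fell_ops_scheme"
    and X :: "('g, 'b, 'x, 'w) hilb_ops_scheme"
    and \<rho> :: "'b \<Rightarrow> 'x \<Rightarrow> 'x"
    and x :: 'x
  assumes "fell_bundle G B"
    and "hilbert_bundle G B X"
    and "bundle_action G B X \<rho>"
    and "hb_deg X x = \<one>\<^bsub>G\<^esub>"
  shows "bundle_map G B (\<lambda>b. hb_ip X x (\<rho> b x))
       \<and> positive_definite G B (\<lambda>b. hb_ip X x (\<rho> b x))"
proof -
  interpret hctx G B X \<rho> using assms(1-3) by (simp add: hctx_def hctx_axioms_def fctx_def)
  show ?thesis using result assms(4) by blast
qed


end
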